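(* Consider the corrupted Lipschitz contextual search problem with pricing loss described in the context, and let the learner run Algorithm 3 (described in the context) with discretization parameter $\eta_0=T^{-1/(d+1)}$ and agnostic-check schedule $\tau_0\ge 1$. Then for any unknown corruption budget $C$ (and every $L$-Lipschitz $f$, context sequence and adaptive corruption strategy with at most $C$ corrupted rounds), the total pricing loss is at most \[ L\cdot O\big(C\log T + T^{d/(d+1)}\log T + C\tau_0 + T/\tau_0\big). \] In particular, with $\tau_0=T^{1/(d+1)}$, the total pricing loss is at most $L\cdot \widetilde{O}\big(T^{d/(d+1)} + C\cdot T^{1/(d+1)}\big)$, where $\widetilde O$ hides logarithmic factors in $T$.
   Context: Problem. Fix $L>0$, $d\ge 1$, horizon $T\ge 2$. An adversary fixes an unknown $f:[0,1]^d\to[0,L]$ with $|f(x)-f(y)|\le L\|x-y\|_\infty$. In each round $t=1,\dots,T$: the adversary chooses $x_t\in[0,1]^d$; the learner observes $x_t$ and posts a guess (price) $q_t$; the adversary observes $q_t$ and sends $\sigma_t\in\{0,1\}$. With $\sigma(u)=1$ if $u>0$, $0$ if $u\le 0$: in uncorrupted rounds $\sigma_t=\sigma(q_t-f(x_t))$, in corrupted rounds $\sigma_t=1-\sigma(q_t-f(x_t))$; the adversary chooses adaptively (after seeing $q_t$) which rounds to corrupt, with at most $C$ corrupted rounds, $C$ unknown to the learner. The (unobserved) pricing loss of round $t$ is $\ell(q_t,f(x_t))=f(x_t)-q_t\cdot\mathbb{1}[q_t\le f(x_t)]$. $\mathtt{len}$ denotes length of an interval and side length of a hypercube. Subroutine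 $\mathtt{MidpointQuery}(I,Y)$, $Y=[a,b]$: guess $q=(a+b)/2$; if $\sigma_t=1$ return $Y\cap[0,q+L\,\mathtt{len}(I)]$, if $\sigma_t=0$ return $Y\cap[q-L\,\mathtt{len}(I),\infty)$. Algorithm 3. The learner uniformly partitions $[0,1]^d$ into hypercubes of side length $\Theta(\eta_0)$. Each hypercube $I_j$ has an associated range $Y_j$ (initially $[0,L]$) and a counter $c_j$ (initially $0$). In round $t$, let $I_j$ be the hypercube containing $x_t$. If $\mathtt{len}(Y_j)<10L\eta_0$ ($I_j$ is "pricing-ready"): set $c_j:=c_j+1$; if $c_j>\tau_0$, guess $\max(Y_j)$ (a "checking round") and set $c_j:=0$; otherwise guess $\min(Y_j)$ (a "pricing round"). The learner is "surprised" if in a checking round it receives $\sigma_t=0$ or in a pricing round it receives $\sigma_t=1$; when surprised it sets $Y_j:=[0,L]$ and $c_j:=0$. If $I_j$ is not pricing-ready, it performs a "searching round" $Y_j:=\mathtt{MidpointQuery}(I_j,Y_j)$. *)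

theory Defs
  imports "HOL-Analysis.Analysis"
begin

text \<open>Contexts are points of [0,1]^d, represented as vectors of type real^'d with d = CARD('d).\<close>

definition unit_cube :: "(real^'d) set" where
  "unit_cube = {x. \<forall>j. 0 \<le> x $ j \<and> x $ j \<le> 1}"

definition dist_inf :: "real^'d \<Rightarrow> real^'d \<Rightarrow> real" where
  "dist_inf x y = Max (range (\<lambda>j. \<bar>x $ j - y $ j\<bar>))"

definition lipschitz_target :: "real \<Rightarrow> (real^'d \<Rightarrow> real) \<Rightarrow> bool" where
  "lipschitz_target L f \<longleftrightarrow>
     (\<forall>x\<in>unit_cube. 0 \<le> f x \<and> f x \<le> L) \<and>
     (\<forall>x\<in>unit_cube. \<forall>y\<in>unit_cube. \<bar>f x - f y\<bar> \<le> L * dist_inf x y)"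

text \<open>sigma(u) = 1 iff u > 0 (booleans encode {0,1}).\<close>
definition sgn01 :: "real \<Rightarrow> bool" where
  "sgn01 u \<longleftrightarrow> u > 0"

definition feedback :: "(real^'d \<Rightarrow> real) \<Rightarrow> real^'d \<Rightarrow> bool \<Rightarrow> real \<Rightarrow> bool" where
  "feedback f x corrupted q = (if corrupted then \<not> sgn01 (q - f x) else sgn01 (q - f x))"

definition pricing_loss :: "real \<Rightarrow> real \<Rightarrow> real" where
  "pricing_loss q v = v - (if q \<le> v then q else 0)"

text \<open>Uniform partition of [0,1]^d into N^d hypercubes of side 1/N; a cube is indexed by
  its integer coordinates (0..N-1 in each direction).\<close>
definition cell :: "nat \<Rightarrow> real^'d \<Rightarrow> nat^'d" where
  "cell N x = (\<chi> j. min (N - 1) (nat \<lfloor>x $ j * real N\<rfloor>))"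

text \<open>Algorithm state: for each hypercube its range Y_j = [a,b] (stored as (a,b)) and its counter c_j.\<close>
type_synonym 'd alg_state = "(nat^'d \<Rightarrow> real \<times> real) \<times> (nat^'d \<Rightarrow> nat)"

definition alg_init :: "real \<Rightarrow> 'd alg_state" where
  "alg_init L = ((\<lambda>_. (0, L)), (\<lambda>_. 0))"

definition alg_guess :: "real \<Rightarrow> real \<Rightarrow> real \<Rightarrow> nat \<Rightarrow> 'd alg_state \<Rightarrow> real^'d \<Rightarrow> real" where
  "alg_guess L eta0 tau0 N st x =
     (let j = cell N x; a = fst (fst st j); b = snd (fst st j) in
      if b - a < 10 * L * eta0 then
        (if real (snd st j + 1) > tau0 then b else a)
      else (a + b) / 2)"

definition alg_update :: "real \<Rightarrow> real \<Rightarrow> real \<Rightarrow> nat \<Rightarrow> 'd alg_state \<Rightarrow> real^'d \<Rightarrow> bool \<Rightarrow> 'd alg_state" where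
  "alg_update L eta0 tau0 N st x s =
     (let j = cell N x; Y = fst st; c = snd st; a = fst (Y j); b = snd (Y j);
          len = 1 / real N in
      if b - a < 10 * L * eta0 then
        (if real (c j + 1) > tau0 then
           \<comment> \<open>checking round: guess max Y_j, counter reset; surprised iff s = 0\<close>
           (if \<not> s then (Y(j := (0, L)), c(j := 0)) else (Y, c(j := 0)))
         else
           \<comment> \<open>pricing round: guess min Y_j; surprised iff s = 1\<close>
           (if s then (Y(j := (0, L)), c(j := 0)) else (Y, c(j := c j + 1))))
      else
        \<comment> \<open>searching round: MidpointQuery(I_j, Y_j)\<close>
        (let q = (a + b) / 2 in
         if s then (Y(j := (max a 0, min b (q + L * len))), c)
         else (Y(j := (max a (q - L * len), b)), c)))"

text \<open>State of the algorithm before round t (rounds are numbered 0,1,...,T-1), when facing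
  target f, contexts xs and corruption pattern cor (cor t = round t is corrupted).\<close>
primrec alg_run :: "real \<Rightarrow> real \<Rightarrow> real \<Rightarrow> nat \<Rightarrow> (real^'d \<Rightarrow> real) \<Rightarrow> (nat \<Rightarrow> real^'d)
                     \<Rightarrow> (nat \<Rightarrow> bool) \<Rightarrow> nat \<Rightarrow> 'd alg_state" where
  "alg_run L eta0 tau0 N f xs cor 0 = alg_init L"
| "alg_run L eta0 tau0 N f xs cor (Suc t) =
     (let st = alg_run L eta0 tau0 N f xs cor t;
          q = alg_guess L eta0 tau0 N st (xs t)
      in alg_update L eta0 tau0 N st (xs t) (feedback f (xs t) (cor t) q))"

text \<open>Algorithm 3's parameters for horizon T: eta0 = T^(-1/(d+1)), cubes of side 1/N with
  N = ceil(1/eta0), so that side length is Theta(eta0).\<close>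
definition eta0_of :: "nat \<Rightarrow> nat \<Rightarrow> real" where
  "eta0_of d T = real T powr (- 1 / (real d + 1))"

definition N_of :: "nat \<Rightarrow> nat \<Rightarrow> nat" where
  "N_of d T = nat \<lceil>1 / eta0_of d T\<rceil>"

definition total_loss :: "real \<Rightarrow> nat \<Rightarrow> real \<Rightarrow> (real^'d \<Rightarrow> real) \<Rightarrow> (nat \<Rightarrow> real^'d)
                          \<Rightarrow> (nat \<Rightarrow> bool) \<Rightarrow> real" where
  "total_loss L T tau0 f xs cor =
     (let d = CARD('d); eta0 = eta0_of d T; N = N_of d T in
      \<Sum>t<T. pricing_loss (alg_guess L eta0 tau0 N (alg_run L eta0 tau0 N f xs cor t) (xs t))
                          (f (xs t)))"

end

theory Submission
  imports Defs
begin


locale ctx =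
  fixes L eta0 tau0 :: real and N :: nat and f :: "real^'d \<Rightarrow> real"
  assumes Lpos: "L > 0" and eta0pos: "eta0 > 0" and tau0: "tau0 \<ge> 1" and Npos: "N \<ge> 1"
    and Neta: "1 \<le> real N * eta0" and lip: "lipschitz_target L f"
begin

definition th :: real where "th = 10 * L * eta0"
definition E :: "nat^'d \<Rightarrow> (real^'d) set" where "E j = {x \<in> unit_cube. cell N x = j}"

lemma f_range: "x \<in> unit_cube \<Longrightarrow> 0 \<le> f x \<and> f x \<le> L"
  using lip unfolding lipschitz_target_def by auto

lemma coord_bound:
  fixes u v :: real
  assumes "0 \<le> u" "u \<le> 1" "0 \<le> v" "v \<le> 1"
    and eq: "min (N - 1) (nat \<lfloor>u * real N\<rfloor>) = min (N - 1) (nat \<lfloor>v * real N\<rfloor>)"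
  shows "\<bar>u - v\<bar> \<le> 1 / real N"
proof -
  have key: "real k \<le> w * real N \<and> w * real N \<le> real k + 1"
    if "0 \<le> w" "w \<le> 1" "k = min (N - 1) (nat \<lfloor>w * real N\<rfloor>)" for w k
  proof (cases "nat \<lfloor>w * real N\<rfloor> \<le> N - 1")
    case True
    then have k: "k = nat \<lfloor>w * real N\<rfloor>" using that by simp
    have "0 \<le> w * real N" using that by simp
    then have "real k = of_int \<lfloor>w * real N\<rfloor>" using k by simp
    then show ?thesis by linarith
  next
    case False
    then have k: "k = N - 1" using that by simp
    have "w * real N \<le> real N" using that by (simp add: mult_left_le_one_le)
    moreover have "real (N - 1) \<le> w * real N"
    proof -
      have "N - 1 \<le> nat \<lfloor>w * real N\<rfloor>" using False by simp
      then have "real (N - 1) \<le> real (nat \<lfloor>w * real N\<rfloor>)" by simp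
      also have "\<dots> = of_int \<lfloor>w * real N\<rfloor>" using that by simp
      also have "\<dots> \<le> w * real N" by simp
      finally show ?thesis .
    qed
    ultimately show ?thesis using k Npos by (simp add: of_nat_diff)
  qed
  define k where "k = min (N - 1) (nat \<lfloor>u * real N\<rfloor>)"
  have A: "real k \<le> u * real N \<and> u * real N \<le> real k + 1" using key assms k_def by blast
  have B: "real k \<le> v * real N \<and> v * real N \<le> real k + 1" using key[of v k] assms k_def by simp
  have "\<bar>u * real N - v * real N\<bar> \<le> 1" using A B by linarith
  then have "\<bar>u - v\<bar> * real N \<le> 1" by (simp add: abs_mult left_diff_distrib[symmetric])
  then show ?thesis using Npos by (simp add: field_simps)
qed

lemma diam:
  assumes "x \<in> E j" "y \<in> E j"
  shows "f y \<le> f x + L / real N"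
proof -
  have xc: "x \<in> unit_cube" and yc: "y \<in> unit_cube" and ce: "cell N x = cell N y"
    using assms unfolding E_def by auto
  have co: "\<bar>x $ i - y $ i\<bar> \<le> 1 / real N" for i
  proof -
    have "cell N x $ i = cell N y $ i" using ce by simp
    then have "min (N - 1) (nat \<lfloor>x $ i * real N\<rfloor>) = min (N - 1) (nat \<lfloor>y $ i * real N\<rfloor>)"
      unfolding cell_def by simp
    then show ?thesis using coord_bound xc yc unfolding unit_cube_def by blast
  qed
  have "dist_inf x y \<le> 1 / real N"
    unfolding dist_inf_def using co by (subst Max_le_iff) auto
  moreover have "\<bar>f x - f y\<bar> \<le> L * dist_inf x y"
    using lip xc yc unfolding lipschitz_target_def by blast
  ultimately have "\<bar>f x - f y\<bar> \<le> L * (1 / real N)"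
    using Lpos by (meson mult_left_mono less_imp_le order_trans)
  then show ?thesis by simp
qed

lemma LN_le: "L / real N \<le> L * eta0"
proof -
  have "1 / real N \<le> eta0" using Neta Npos by (simp add: field_simps)
  then show ?thesis using Lpos by (simp add: mult_left_mono divide_inverse)
qed

lemma th_pos: "th > 0" using Lpos eta0pos unfolding th_def by simp

lemma th_ge: "10 * (L / real N) \<le> th" using LN_le unfolding th_def by simp

definition rr :: "real \<Rightarrow> real" where
  "rr l = (if l < th then 0 else ln (l / th) / ln (5/3) + 1)"

definition RR :: real where "RR = rr L + 1"

lemma ln53: "ln (5/3::real) > 0" by simp

lemma rr_nonneg: "rr l \<ge> 0"
  unfolding rr_def using th_pos by (auto intro!: divide_nonneg_pos)

lemma rr_ge1: "th \<le> l \<Longrightarrow> rr l \<ge> 1"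
  unfolding rr_def using th_pos by (auto intro!: divide_nonneg_pos)

lemma rr_mono: assumes "l \<le> l'" shows "rr l \<le> rr l'"
proof (cases "l < th")
  case True then show ?thesis using rr_nonneg[of l'] unfolding rr_def by simp
next
  case False
  then have "ln (l / th) \<le> ln (l' / th)" using assms th_pos
    by (subst ln_le_cancel_iff) (auto intro: divide_right_mono)
  then show ?thesis using False assms unfolding rr_def
    by (auto intro: divide_right_mono)
qed

lemma rr_step: assumes "th \<le> l" "l' \<le> 3/5 * l" shows "rr l' \<le> rr l - 1"
proof (cases "l' < th")
  case True then show ?thesis using rr_ge1[OF assms(1)] unfolding rr_def by simp
next
  case False
  have lp: "l > 0" using assms th_pos by simp
  have "l' / th \<le> 3/5 * l / th" using assms th_pos by (intro divide_right_mono) auto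
  then have h1: "ln (l' / th) \<le> ln (3/5 * l / th)" using False assms th_pos
    by (subst ln_le_cancel_iff) auto
  have h2: "ln (3/5 * l / th) = ln (l / th) - ln (5/3)" using lp th_pos
    by (simp add: ln_div ln_mult)
  have "ln (l' / th) / ln (5/3) \<le> (ln (l / th) - ln (5/3)) / ln (5/3)"
    using h1 h2 ln53 by (intro divide_right_mono) auto
  also have "\<dots> = ln (l / th) / ln (5/3) - 1" using ln53 by (simp add: diff_divide_distrib)
  finally have "ln (l' / th) / ln (5/3) \<le> ln (l / th) / ln (5/3) - 1" .
  then show ?thesis using False assms unfolding rr_def by auto
qed

lemma rr_le_RR: "l \<le> L \<Longrightarrow> rr l \<le> RR - 1"
  using rr_mono unfolding RR_def by simp

lemma RR_ge1: "RR \<ge> 1" using rr_nonneg unfolding RR_def by simp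


definition G :: "nat^'d \<Rightarrow> real \<Rightarrow> real \<Rightarrow> bool" where
  "G j a b \<longleftrightarrow> (\<forall>x\<in>E j. a \<le> f x \<and> f x \<le> b) \<and> (L \<le> b \<or> (\<forall>x\<in>E j. f x < b))"
definition B :: "nat^'d \<Rightarrow> real \<Rightarrow> bool" where
  "B j b \<longleftrightarrow> E j \<noteq> {} \<and> (\<forall>x\<in>E j. b < f x)"
definition KK :: real where "KK = L * (RR + 3)"

definition p1 :: "real \<Rightarrow> real \<Rightarrow> real" where
  "p1 a b = (if L \<le> b then L * RR else if b - a < th then 0 else L * rr (b - a))"
definition p2 :: "real \<Rightarrow> real \<Rightarrow> real" where
  "p2 a b = (if b - a < th then 0 else 5/4 * (b - a))"
definition p3 :: "nat \<Rightarrow> real" where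
  "p3 c = 6 * L * min (real c) tau0 / tau0"
definition p4 :: "nat^'d \<Rightarrow> real \<Rightarrow> nat \<Rightarrow> real" where
  "p4 j b c = (if B j b then L * (tau0 + 1 - min (real c) tau0) else 0)"
definition p5 :: "nat^'d \<Rightarrow> real \<Rightarrow> real \<Rightarrow> real" where
  "p5 j a b = (if G j a b then 0 else KK)"

definition psi :: "nat^'d \<Rightarrow> real \<Rightarrow> real \<Rightarrow> nat \<Rightarrow> real" where
  "psi j a b c = p1 a b + p2 a b + p3 c + p4 j b c + p5 j a b"

definition A0 :: real where "A0 = L * (11 * eta0 + 6 / tau0)"
definition PM :: real where "PM = L * (2 * RR + 12 + tau0)"

lemma p1_nn: "p1 a b \<ge> 0" using Lpos rr_nonneg RR_ge1 unfolding p1_def by auto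
lemma p2_nn: "p2 a b \<ge> 0" using th_pos unfolding p2_def by auto
lemma p3_nn: "p3 c \<ge> 0" using Lpos tau0 unfolding p3_def by auto
lemma p4_nn: "p4 j b c \<ge> 0" using Lpos tau0 unfolding p4_def by auto
lemma KK_pos: "KK > 0" using Lpos RR_ge1 unfolding KK_def by auto
lemma p5_nn: "p5 j a b \<ge> 0" using KK_pos unfolding p5_def by auto
lemma psi_nn: "psi j a b c \<ge> 0" unfolding psi_def using p1_nn p2_nn p3_nn p4_nn p5_nn
  by (meson add_nonneg_nonneg)
lemma A0_nn: "A0 \<ge> 0" using Lpos tau0 eta0pos unfolding A0_def by auto

lemma psi_le_PM: assumes "0 \<le> a" "a \<le> b" "b \<le> L" shows "psi j a b c \<le> PM"
proof -
  have "p1 a b \<le> L * RR" using rr_le_RR[of "b - a"] assms Lpos RR_ge1 unfolding p1_def by auto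
  moreover have "p2 a b \<le> 5/4 * L" using assms unfolding p2_def by auto
  moreover have "p3 c \<le> 6 * L" using Lpos tau0 unfolding p3_def by (auto simp: field_simps)
  moreover have "p4 j b c \<le> L * (tau0 + 1)" using Lpos tau0 unfolding p4_def by auto
  moreover have "p5 j a b \<le> L * (RR + 3)" using KK_pos unfolding p5_def KK_def by auto
  ultimately show ?thesis unfolding psi_def PM_def using Lpos by (simp add: algebra_simps)
qed

lemma psi_reset: assumes "x \<in> E j" shows "psi j 0 L 0 \<le> L * RR + 5/4 * L"
proof -
  have fr: "\<forall>y\<in>E j. 0 \<le> f y \<and> f y \<le> L" using f_range unfolding E_def by auto
  have "G j 0 L" unfolding G_def using fr by auto
  moreover have "\<not> B j L" unfolding B_def using fr by fastforce
  ultimately show ?thesis using tau0 Lpos unfolding psi_def p1_def p2_def p3_def p4_def p5_def by auto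
qed

lemma p3_check: assumes "real (c + 1) > tau0" shows "p3 c \<ge> 3 * L"
proof -
  have c1: "c \<ge> 1" using assms tau0 by (cases c) auto
  have "min (real c) tau0 / tau0 \<ge> 1/2"
  proof (cases "real c \<le> tau0")
    case True
    have "tau0 < 2 * real c" using assms c1 by simp
    then show ?thesis using True tau0 by (simp add: field_simps)
  next
    case False then show ?thesis using tau0 by simp
  qed
  then have "6 * L * (min (real c) tau0 / tau0) \<ge> 6 * L * (1/2)" using Lpos
    by (intro mult_left_mono) auto
  then show ?thesis unfolding p3_def by simp
qed

lemma loss_le: "0 \<le> q \<Longrightarrow> v \<le> L \<Longrightarrow> pricing_loss q v \<le> L"
  unfolding pricing_loss_def by auto


lemma E_range: "x \<in> E j \<Longrightarrow> 0 \<le> f x \<and> f x \<le> L"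
  using f_range unfolding E_def by auto

lemma reset_ok:
  assumes x: "x \<in> E j" and ge: "psi j a b c \<ge> L * RR + 9/4 * L" and lo: "lo \<le> L"
  shows "lo + psi j 0 L 0 \<le> psi j a b c + A0"
  using psi_reset[OF x] ge lo A0_nn by linarith

lemma ge_reset_notG:
  assumes "\<not> G j a b" shows "psi j a b c \<ge> L * RR + 9/4 * L"
  using assms p1_nn[of a b] p2_nn[of a b] p3_nn[of c] p4_nn[of j b c] Lpos
  unfolding psi_def p5_def KK_def by (simp add: algebra_simps)

context
  fixes x j and a b :: real
  assumes x: "x \<in> E j" and a0: "0 \<le> a" and ab: "a \<le> b" and bL: "b \<le> L"
begin

lemma case_search_true:
  assumes s: "th \<le> b - a" and q: "f x < (a + b) / 2"
  shows "pricing_loss ((a + b) / 2) (f x) + psi j a (min b ((a + b) / 2 + L / real N)) c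
         \<le> psi j a b c + A0"
proof -
  define q where "q = (a + b) / 2"
  define b' where "b' = min b (q + L / real N)"
  have dpos: "L / real N > 0" using Lpos Npos by simp
  have d10: "10 * (L / real N) \<le> b - a" using th_ge s by linarith
  have loss: "pricing_loss q (f x) = f x" using q unfolding pricing_loss_def q_def by auto
  have fxL: "f x \<le> L" using E_range[OF x] by simp
  have q2: "2 * q = a + b" unfolding q_def by simp
  have "b' \<le> q + L / real N" unfolding b'_def by simp
  then have l'le: "b' - a \<le> 3/5 * (b - a)" using d10 q2 by argo
  have qa: "a \<le> q" "q \<le> b" using q2 ab by linarith+
  have l'ge: "0 \<le> b' - a" unfolding b'_def using ab dpos qa by auto
  have b'L: "b' < L" if "L \<le> b"
  proof -
    have "q + L / real N < L" using q2 that bL d10 dpos by linarith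
    then show ?thesis unfolding b'_def by simp
  qed
  have P1: "p1 a b' \<le> p1 a b - L"
  proof (cases "L \<le> b")
    case True
    have "rr (b' - a) \<le> RR - 1" using rr_le_RR[of "b' - a"] l'le bL a0 ab by simp
    then have "p1 a b' \<le> L * (RR - 1)" using b'L[OF True] Lpos RR_ge1 unfolding p1_def
      by (auto intro: mult_left_mono)
    then show ?thesis using True unfolding p1_def by (simp add: algebra_simps)
  next
    case False
    have "b' \<le> b" unfolding b'_def by simp
    then have nb': "\<not> L \<le> b'" using False by simp
    have "rr (b' - a) \<le> rr (b - a) - 1" using rr_step[OF s l'le] .
    then have "p1 a b' \<le> L * (rr (b - a) - 1)" using nb' Lpos rr_nonneg[of "b-a"] rr_ge1[OF s]
      unfolding p1_def by (auto intro: mult_left_mono)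
    then show ?thesis using False s th_pos unfolding p1_def by (simp add: algebra_simps)
  qed
  have P2: "p2 a b' \<le> p2 a b" unfolding p2_def using l'le l'ge s th_pos by auto
  have P4: "p4 j b' c \<le> p4 j b c"
  proof -
    have "f x < b'" unfolding b'_def using q ab dpos qa unfolding q_def[symmetric] by auto
    then have "\<not> B j b'" using x unfolding B_def by force
    then show ?thesis using p4_nn[of j b c] unfolding p4_def by simp
  qed
  have P5: "p5 j a b' \<le> p5 j a b"
  proof (cases "G j a b")
    case True
    have "G j a b'"
    proof (cases "b \<le> q + L / real N")
      case True
      then show ?thesis using \<open>G j a b\<close> unfolding b'_def by simp
    next
      case False
      then have bq: "b' = q + L / real N" unfolding b'_def by simp
      have "f y < b'" if "y \<in> E j" for y
        using diam[OF x that] q bq unfolding q_def[symmetric] by simp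
      then show ?thesis using \<open>G j a b\<close> unfolding G_def by (auto intro: less_imp_le)
    qed
    then show ?thesis unfolding p5_def using True by simp
  next
    case False then show ?thesis unfolding p5_def using KK_pos by auto
  qed
  have "pricing_loss q (f x) + psi j a b' c \<le> psi j a b c + A0"
    using loss fxL P1 P2 P4 P5 A0_nn unfolding psi_def by linarith
  then show ?thesis unfolding q_def b'_def .
qed


lemma case_search_false:
  assumes s: "th \<le> b - a" and q: "\<not> f x < (a + b) / 2"
  shows "pricing_loss ((a + b) / 2) (f x) + psi j (max a ((a + b) / 2 - L / real N)) b c
         \<le> psi j a b c + A0"
proof -
  define q where "q = (a + b) / 2"
  define a' where "a' = max a (q - L / real N)"
  have q2: "2 * q = a + b" unfolding q_def by simp
  have qa: "a \<le> q" "q \<le> b" using q2 ab by linarith+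
  have qf: "q \<le> f x" using q unfolding q_def by simp
  have dpos: "L / real N > 0" using Lpos Npos by simp
  have d10: "10 * (L / real N) \<le> b - a" using th_ge s by linarith
  have loss: "pricing_loss q (f x) = f x - q" using qf unfolding pricing_loss_def by auto
  have fxL: "f x \<le> L" using E_range[OF x] by simp
  have "q - L / real N \<le> a'" "a \<le> a'" unfolding a'_def by simp_all
  then have l'le: "b - a' \<le> 3/5 * (b - a)" using d10 q2 by argo
  have l'ge: "0 \<le> b - a'" unfolding a'_def using qa dpos ab by auto
  have P12: "pricing_loss q (f x) + p1 a' b + p2 a' b \<le> p1 a b + p2 a b"
  proof (cases "L \<le> b")
    case True
    have "p2 a' b \<le> 5/4 * (3/5 * (b - a))" using l'le l'ge unfolding p2_def by auto
    moreover have "p2 a b = 5/4 * (b - a)" using s th_pos unfolding p2_def by auto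
    moreover have "p1 a' b = p1 a b" using True unfolding p1_def by simp
    moreover have "pricing_loss q (f x) \<le> (b - a) / 2" using loss fxL True bL q2 by simp
    ultimately show ?thesis by simp
  next
    case False
    have "rr (b - a') \<le> rr (b - a) - 1" using rr_step[OF s l'le] .
    then have "p1 a' b \<le> L * (rr (b - a) - 1)" using False Lpos rr_nonneg[of "b-a"] rr_ge1[OF s]
      unfolding p1_def by (auto intro: mult_left_mono)
    moreover have "p1 a b = L * rr (b - a)" using False s th_pos unfolding p1_def by auto
    moreover have "p2 a' b \<le> p2 a b" unfolding p2_def using l'le l'ge s th_pos by auto
    moreover have "pricing_loss q (f x) \<le> L" using loss fxL qa a0 by simp
    ultimately show ?thesis by (simp add: algebra_simps)
  qed
  have P5: "p5 j a' b \<le> p5 j a b"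
  proof (cases "G j a b")
    case True
    have "a' \<le> f y" if "y \<in> E j" for y
    proof -
      have "f x \<le> f y + L / real N" using diam[OF that x] .
      then have "q - L / real N \<le> f y" using qf by simp
      moreover have "a \<le> f y" using True that unfolding G_def by auto
      ultimately show ?thesis unfolding a'_def by simp
    qed
    then have "G j a' b" using True unfolding G_def by auto
    then show ?thesis unfolding p5_def using True by simp
  next
    case False then show ?thesis unfolding p5_def using KK_pos by auto
  qed
  have "pricing_loss q (f x) + psi j a' b c \<le> psi j a b c + A0"
    using P12 P5 A0_nn unfolding psi_def p4_def by linarith
  then show ?thesis unfolding q_def a'_def .
qed


lemma case_price_surprise:
  assumes q: "f x < a"
  shows "pricing_loss a (f x) + psi j 0 L 0 \<le> psi j a b c + A0"
proof -
  have "\<not> G j a b" using x q unfolding G_def by force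
  moreover have "pricing_loss a (f x) \<le> L" using loss_le a0 E_range[OF x] by simp
  ultimately show ?thesis using reset_ok[OF x] ge_reset_notG by blast
qed

lemma case_price_ok:
  assumes s: "b - a < th" and c: "\<not> real (c + 1) > tau0" and q: "\<not> f x < a"
  shows "pricing_loss a (f x) + psi j a b (c + 1) \<le> psi j a b c + A0"
proof -
  have loss: "pricing_loss a (f x) = f x - a" using q unfolding pricing_loss_def by auto
  have fxL: "f x \<le> L" using E_range[OF x] by simp
  have c1: "real c + 1 \<le> tau0" using c by simp
  have P3: "p3 (c + 1) = p3 c + 6 * L / tau0" using c1 tau0
    unfolding p3_def by (simp add: field_simps)
  show ?thesis
  proof (cases "B j b")
    case True
    have "p4 j b (c + 1) = p4 j b c - L" using True c1 unfolding p4_def by (simp add: algebra_simps)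
    moreover have "pricing_loss a (f x) \<le> L" using loss fxL a0 by simp
    moreover have "6 * L / tau0 \<le> A0" using Lpos eta0pos unfolding A0_def by (simp add: algebra_simps)
    ultimately show ?thesis using P3 unfolding psi_def by simp
  next
    case False
    then obtain y where y: "y \<in> E j" "f y \<le> b" using x unfolding B_def by force
    have "f x \<le> f y + L / real N" using diam[OF y(1) x] .
    then have "f x - a \<le> b - a + L * eta0" using y LN_le by linarith
    then have "pricing_loss a (f x) \<le> 11 * L * eta0" using loss s unfolding th_def by linarith
    moreover have "p4 j b (c + 1) = p4 j b c" using False unfolding p4_def by simp
    ultimately show ?thesis using P3 unfolding psi_def A0_def by (simp add: algebra_simps)
  qed
qed

lemma case_check_ok:
  assumes c: "real (c + 1) > tau0" and q: "f x < b"
  shows "pricing_loss b (f x) + psi j a b 0 \<le> psi j a b c + A0"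
proof -
  have "pricing_loss b (f x) \<le> L" using loss_le a0 ab E_range[OF x] by simp
  moreover have "p3 c \<ge> 3 * L" using p3_check[OF c] .
  moreover have "p3 0 = 0" unfolding p3_def using tau0 by simp
  moreover have "\<not> B j b" using x q unfolding B_def by force
  ultimately show ?thesis using A0_nn Lpos unfolding psi_def p4_def by simp
qed

lemma case_check_surprise:
  assumes c: "real (c + 1) > tau0" and q: "\<not> f x < b"
  shows "pricing_loss b (f x) + psi j 0 L 0 \<le> psi j a b c + A0"
proof -
  have lo: "pricing_loss b (f x) \<le> L" using loss_le a0 ab E_range[OF x] by simp
  have "psi j a b c \<ge> L * RR + 9/4 * L"
  proof (cases "G j a b")
    case True
    then have "f x \<le> b" using x unfolding G_def by auto
    then have "L \<le> b" using True q x unfolding G_def by auto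
    then have "p1 a b = L * RR" unfolding p1_def by simp
    moreover have "p3 c \<ge> 3 * L" using p3_check[OF c] .
    ultimately show ?thesis using p2_nn[of a b] p4_nn[of j b c] p5_nn[of j a b] Lpos
      unfolding psi_def by linarith
  next
    case False then show ?thesis using ge_reset_notG by blast
  qed
  then show ?thesis using reset_ok[OF x _ lo] by blast
qed

end


definition inv :: "'d alg_state \<Rightarrow> bool" where
  "inv st \<longleftrightarrow> (\<forall>j. 0 \<le> fst (fst st j) \<and> fst (fst st j) \<le> snd (fst st j) \<and> snd (fst st j) \<le> L)"

definition phi :: "'d alg_state \<Rightarrow> nat^'d \<Rightarrow> real" where
  "phi st j = psi j (fst (fst st j)) (snd (fst st j)) (snd st j)"

lemma inv_init: "inv (alg_init L)" unfolding inv_def alg_init_def using Lpos by simp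

lemma step:
  fixes cr :: bool
  assumes I: "inv st" and xc: "x \<in> unit_cube" and j: "j = cell N x"
  defines "q \<equiv> alg_guess L eta0 tau0 N st x"
  defines "st' \<equiv> alg_update L eta0 tau0 N st x (feedback f x cr q)"
  shows "inv st'" "\<And>i. i \<noteq> j \<Longrightarrow> phi st' i = phi st i"
    "pricing_loss q (f x) + phi st' j \<le> phi st j + (if cr then L + PM else A0)"
proof -
  obtain Y c where st: "st = (Y, c)" by (cases st)
  define a where "a = fst (Y j)"
  define b where "b = snd (Y j)"
  have Yj: "Y j = (a, b)" unfolding a_def b_def by simp
  have xE: "x \<in> E j" unfolding E_def using xc j by simp
  have a0: "0 \<le> a" and ab: "a \<le> b" and bL: "b \<le> L"
    using I unfolding inv_def st a_def b_def by auto
  have qa: "a \<le> (a + b) / 2" "(a + b) / 2 \<le> b" using ab by simp_all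
  have dpos: "L * (1 / real N) > 0" using Lpos Npos by simp
  have dd: "L * (1 / real N) = L / real N" by simp
  have thd: "10 * L * eta0 = th" unfolding th_def by simp
  have q_eq: "q = (if b - a < th then (if real (c j + 1) > tau0 then b else a) else (a + b) / 2)"
    unfolding q_def alg_guess_def st Let_def using j Yj thd by simp
  have st'_eq: "st' = (if b - a < th then
        (if real (c j + 1) > tau0 then
           (if \<not> feedback f x cr q then (Y(j := (0, L)), c(j := 0)) else (Y, c(j := 0)))
         else
           (if feedback f x cr q then (Y(j := (0, L)), c(j := 0)) else (Y, c(j := c j + 1))))
      else
        (if feedback f x cr q then (Y(j := (max a 0, min b ((a + b) / 2 + L / real N))), c)
         else (Y(j := (max a ((a + b) / 2 - L / real N), b)), c)))"
    unfolding st'_def alg_update_def st Let_def using j Yj thd dd by simp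
  have fb: "feedback f x cr q = (if cr then \<not> f x < q else f x < q)"
    unfolding feedback_def sgn01_def by simp
  have h1: "a \<le> (a + b) / 2 + L / real N" "(a + b) / 2 - L / real N \<le> b"
  proof -
    have "a \<le> (a + b) / 2" "(a + b) / 2 \<le> b" using ab by simp_all
    moreover have "L / real N > 0" using dpos by simp
    ultimately show "a \<le> (a + b) / 2 + L / real N" "(a + b) / 2 - L / real N \<le> b"
      by linarith+
  qed
  show "inv st'"
    using I a0 ab bL qa dpos Lpos h1 unfolding st'_eq inv_def st
    by (auto simp: Yj)
  show "\<And>i. i \<noteq> j \<Longrightarrow> phi st' i = phi st i"
    unfolding st'_eq phi_def st by auto
  have phij: "phi st j = psi j a b (c j)" unfolding phi_def st by (simp add: Yj)
  show "pricing_loss q (f x) + phi st' j \<le> phi st j + (if cr then L + PM else A0)"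
  proof (cases cr)
    case True
    have "0 \<le> q" unfolding q_eq using a0 ab by auto
    then have "pricing_loss q (f x) \<le> L" using loss_le E_range[OF xE] by simp
    moreover have "phi st' j \<le> PM"
    proof -
      have "inv st'" by fact
      then show ?thesis unfolding phi_def inv_def using psi_le_PM by blast
    qed
    moreover have "phi st j \<ge> 0" unfolding phi_def using psi_nn by simp
    ultimately show ?thesis using True by simp
  next
    case False
    then have fb': "feedback f x cr q = (f x < q)" using fb by simp
    show ?thesis
    proof (cases "b - a < th")
      case rd: True
      show ?thesis
      proof (cases "real (c j + 1) > tau0")
        case ck: True
        then have qb: "q = b" using q_eq rd by simp
        show ?thesis
        proof (cases "f x < b")
          case True
          then have "phi st' j = psi j a b 0" unfolding st'_eq unfolding fb' unfolding qb phi_def using rd ck Yj by simp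
          then show ?thesis using case_check_ok[OF xE a0 ab bL ck True] False qb phij by simp
        next
          case ff: False
          then have "phi st' j = psi j 0 L 0" unfolding st'_eq unfolding fb' unfolding qb phi_def using rd ck by simp
          then show ?thesis using case_check_surprise[OF xE a0 ab bL ck ff] False qb phij by simp
        qed
      next
        case ck: False
        then have qa': "q = a" using q_eq rd by simp
        show ?thesis
        proof (cases "f x < a")
          case True
          then have "phi st' j = psi j 0 L 0" unfolding st'_eq unfolding fb' unfolding qa' phi_def using rd ck by simp
          then show ?thesis using case_price_surprise[OF xE a0 ab bL True] False qa' phij by simp
        next
          case ff: False
          then have "phi st' j = psi j a b (c j + 1)" unfolding st'_eq unfolding fb' unfolding qa' phi_def using rd ck Yj by simp
          then show ?thesis using case_price_ok[OF xE a0 ab bL rd ck ff] False qa' phij by simp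
        qed
      qed
    next
      case sr: False
      then have qm: "q = (a + b) / 2" using q_eq by simp
      have sr': "th \<le> b - a" using sr by simp
      show ?thesis
      proof (cases "f x < (a + b) / 2")
        case True
        then have "phi st' j = psi j a (min b ((a + b) / 2 + L / real N)) (c j)"
          unfolding st'_eq unfolding fb' unfolding qm phi_def using sr a0 by simp
        then show ?thesis using case_search_true[OF xE a0 ab bL sr' True] False phij unfolding qm by simp
      next
        case ff: False
        then have "phi st' j = psi j (max a ((a + b) / 2 - L / real N)) b (c j)"
          unfolding st'_eq unfolding fb' unfolding qm phi_def using sr by simp
        then show ?thesis using case_search_false[OF xE a0 ab bL sr' ff] False phij unfolding qm by simp
      qed
    qed
  qed
qed


definition J :: "(nat^'d) set" where "J = cell N ` unit_cube"

lemma J_sub: "J \<subseteq> (\<lambda>g. vec_lambda g) ` (PiE UNIV (\<lambda>_. {..<N}))"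
proof
  fix i assume "i \<in> J"
  then obtain x where i: "i = cell N x" unfolding J_def by auto
  have g: "(\<lambda>k. min (N - 1) (nat \<lfloor>x $ k * real N\<rfloor>)) \<in> PiE UNIV (\<lambda>_. {..<N})"
    using Npos by auto
  have "i = vec_lambda (\<lambda>k. min (N - 1) (nat \<lfloor>x $ k * real N\<rfloor>))"
    unfolding i cell_def by simp
  then show "i \<in> (\<lambda>g. vec_lambda g) ` (PiE UNIV (\<lambda>_. {..<N}))"
    using g by (rule image_eqI)
qed

lemma J_finite: "finite J"
  by (rule finite_subset[OF J_sub]) (intro finite_imageI finite_PiE; simp)

lemma J_card: "card J \<le> N ^ CARD('d)"
proof -
  have "card J \<le> card ((\<lambda>g. vec_lambda g) ` (PiE (UNIV::'d set) (\<lambda>_. {..<N})))"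
    using J_sub by (intro card_mono finite_imageI finite_PiE) auto
  also have "\<dots> \<le> card (PiE (UNIV::'d set) (\<lambda>_. {..<N}))" by (rule card_image_le) (auto intro: finite_PiE)
  also have "\<dots> = N ^ CARD('d)" by (simp add: card_PiE)
  finally show ?thesis .
qed

lemma J_E: "i \<in> J \<Longrightarrow> \<exists>x. x \<in> E i" unfolding J_def E_def by auto

definition Phi :: "'d alg_state \<Rightarrow> real" where "Phi st = (\<Sum>i\<in>J. phi st i)"

lemma Phi_nn: "Phi st \<ge> 0" unfolding Phi_def phi_def using psi_nn by (simp add: sum_nonneg)

lemma Phi_init: "Phi (alg_init L) \<le> real (N ^ CARD('d)) * (L * RR + 5/4 * L)"
proof -
  have "Phi (alg_init L) \<le> (\<Sum>i\<in>J. L * RR + 5/4 * L)"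
    unfolding Phi_def
  proof (rule sum_mono)
    fix i assume "i \<in> J"
    then obtain x where "x \<in> E i" using J_E by blast
    then have "psi i 0 L 0 \<le> L * RR + 5/4 * L" by (rule psi_reset)
    then show "phi (alg_init L) i \<le> L * RR + 5/4 * L" unfolding phi_def alg_init_def by simp
  qed
  also have "\<dots> = real (card J) * (L * RR + 5/4 * L)" by simp
  also have "\<dots> \<le> real (N ^ CARD('d)) * (L * RR + 5/4 * L)"
  proof (rule mult_right_mono)
    show "real (card J) \<le> real (N ^ CARD('d))" using J_card by linarith
    show "0 \<le> L * RR + 5/4 * L" using Lpos RR_ge1 by simp
  qed
  finally show ?thesis .
qed

lemma run_bound:
  fixes xs :: "nat \<Rightarrow> real^'d" and cor :: "nat \<Rightarrow> bool"
  assumes xs: "\<forall>t<T. xs t \<in> unit_cube"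
  shows "n \<le> T \<Longrightarrow> inv (alg_run L eta0 tau0 N f xs cor n) \<and>
    (\<Sum>t<n. pricing_loss (alg_guess L eta0 tau0 N (alg_run L eta0 tau0 N f xs cor t) (xs t)) (f (xs t)))
      + Phi (alg_run L eta0 tau0 N f xs cor n)
    \<le> Phi (alg_init L) + (\<Sum>t<n. if cor t then L + PM else A0)"
proof (induction n)
  case 0
  then show ?case using inv_init by simp
next
  case (Suc n)
  define st where "st = alg_run L eta0 tau0 N f xs cor n"
  define q where "q = alg_guess L eta0 tau0 N st (xs n)"
  define st' where "st' = alg_update L eta0 tau0 N st (xs n) (feedback f (xs n) (cor n) q)"
  define j where "j = cell N (xs n)"
  have IH: "inv st" "(\<Sum>t<n. pricing_loss (alg_guess L eta0 tau0 N (alg_run L eta0 tau0 N f xs cor t) (xs t)) (f (xs t)))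
      + Phi st \<le> Phi (alg_init L) + (\<Sum>t<n. if cor t then L + PM else A0)"
    using Suc unfolding st_def by auto
  have xc: "xs n \<in> unit_cube" using xs Suc.prems by simp
  have run: "alg_run L eta0 tau0 N f xs cor (Suc n) = st'"
    unfolding st'_def q_def st_def by (simp add: Let_def)
  note S = step[where cr = "cor n", OF IH(1) xc j_def, folded q_def, folded st'_def]
  have jJ: "j \<in> J" unfolding J_def j_def using xc by simp
  have "Phi st' = phi st' j + (\<Sum>i\<in>J - {j}. phi st' i)"
    unfolding Phi_def using J_finite jJ by (simp add: sum.remove)
  also have "(\<Sum>i\<in>J - {j}. phi st' i) = (\<Sum>i\<in>J - {j}. phi st i)"
    using S(2) by (intro sum.cong) auto
  finally have "Phi st' = phi st' j + (\<Sum>i\<in>J - {j}. phi st i)" .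
  moreover have "Phi st = phi st j + (\<Sum>i\<in>J - {j}. phi st i)"
    unfolding Phi_def using J_finite jJ by (simp add: sum.remove)
  ultimately have "pricing_loss q (f (xs n)) + Phi st' \<le> Phi st + (if cor n then L + PM else A0)"
    using S(3) by simp
  then show ?case using IH S(1) unfolding run by (simp add: st_def q_def)
qed


lemma total_bound:
  fixes xs :: "nat \<Rightarrow> real^'d" and cor :: "nat \<Rightarrow> bool"
  assumes xs: "\<forall>t<T. xs t \<in> unit_cube" and C: "card {t. t < T \<and> cor t} \<le> C"
  shows "(\<Sum>t<T. pricing_loss (alg_guess L eta0 tau0 N (alg_run L eta0 tau0 N f xs cor t) (xs t)) (f (xs t)))
    \<le> real (N ^ CARD('d)) * (L * RR + 5/4 * L) + real T * A0 + real C * (L + PM)"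
proof -
  have PMp: "L + PM \<ge> 0" using Lpos RR_ge1 tau0 unfolding PM_def by simp
  have R: "(\<Sum>t<T. pricing_loss (alg_guess L eta0 tau0 N (alg_run L eta0 tau0 N f xs cor t) (xs t)) (f (xs t)))
      + Phi (alg_run L eta0 tau0 N f xs cor T)
    \<le> Phi (alg_init L) + (\<Sum>t<T. if cor t then L + PM else A0)"
    using run_bound[OF xs, of T cor] by simp
  have "(\<Sum>t<T. if cor t then L + PM else A0) \<le> (\<Sum>t<T. A0 + (if cor t then L + PM else 0))"
    using A0_nn PMp by (intro sum_mono) auto
  also have "\<dots> = real T * A0 + (\<Sum>t\<in>{t. t < T \<and> cor t}. L + PM)"
    by (simp add: sum.distrib sum.If_cases lessThan_def Collect_conj_eq Int_commute)
  also have "\<dots> = real T * A0 + real (card {t. t < T \<and> cor t}) * (L + PM)" by simp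
  also have "\<dots> \<le> real T * A0 + real C * (L + PM)"
    using C PMp by (simp add: mult_right_mono)
  finally show ?thesis using R Phi_nn[of "alg_run L eta0 tau0 N f xs cor T"] Phi_init by linarith
qed

end

lemma ln53_ge: "ln (5/3::real) \<ge> 2/5"
proof -
  have "ln (3/5::real) \<le> 3/5 - 1" by (rule ln_le_minus_one) simp
  moreover have "ln (3/5::real) = - ln (5/3)" by (simp add: ln_div)
  ultimately show ?thesis by simp
qed

lemma ln2_ge: "ln (2::real) \<ge> 1/2"
proof -
  have "ln (1/2::real) \<le> 1/2 - 1" by (rule ln_le_minus_one) simp
  moreover have "ln (1/2::real) = - ln 2" by (simp add: ln_div)
  ultimately show ?thesis by simp
qed

lemma main_bound:
  fixes f :: "real^'d \<Rightarrow> real" and xs :: "nat \<Rightarrow> real^'d" and cor :: "nat \<Rightarrow> bool"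
  assumes T: "T \<ge> 2" and L: "L > 0" and lip: "lipschitz_target L f"
    and xs: "\<forall>t<T. xs t \<in> unit_cube" and C: "card {t. t < T \<and> cor t} \<le> C" and tau0: "tau0 \<ge> 1"
  shows "total_loss L T tau0 f xs cor \<le> L * (2 ^ CARD('d) * 10 + 62) *
     (real C * ln (real T) + real T powr (real CARD('d) / (real CARD('d) + 1)) * ln (real T)
      + real C * tau0 + real T / tau0)"
proof -
  define d where "d = CARD('d)"
  define \<eta> where "\<eta> = eta0_of d T"
  define N where "N = N_of d T"
  define u where "u = real T powr (1 / (real d + 1))"
  define P where "P = real T powr (real d / (real d + 1))"
  define l where "l = ln (real T)"
  have Tpos: "real T > 0" using T by simp
  have T1: "real T \<ge> 1" using T by simp
  have u1: "u \<ge> 1" unfolding u_def using T1 by (intro ge_one_powr_ge_zero) auto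
  have eta_eq: "\<eta> = 1 / u"
  proof -
    have e: "- 1 / (real d + 1) = - (1 / (real d + 1))" by simp
    show ?thesis unfolding \<eta>_def eta0_of_def u_def e by (rule powr_minus_divide)
  qed
  have etapos: "\<eta> > 0" using eta_eq u1 by simp
  have N_eq: "N = nat \<lceil>u\<rceil>"
  proof -
    have "N = nat \<lceil>1 / \<eta>\<rceil>" unfolding N_def N_of_def \<eta>_def by simp
    also have "1 / \<eta> = u" unfolding eta_eq by simp
    finally show ?thesis .
  qed
  have cu: "real N = of_int \<lceil>u\<rceil>" unfolding N_eq using u1 by simp
  have Nge: "real N \<ge> u" unfolding cu by simp
  have Nle: "real N \<le> 2 * u" unfolding cu using u1 by linarith
  have N1: "N \<ge> 1" using Nge u1 by linarith
  have Neta: "1 \<le> real N * \<eta>" unfolding eta_eq using Nge u1 by (simp add: le_divide_eq)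
  interpret ctx L \<eta> tau0 N f
    by (rule ctx.intro[OF L etapos tau0 N1 Neta lip])
  have tot: "total_loss L T tau0 f xs cor =
     (\<Sum>t<T. pricing_loss (alg_guess L \<eta> tau0 N (alg_run L \<eta> tau0 N f xs cor t) (xs t)) (f (xs t)))"
    unfolding total_loss_def Let_def d_def \<eta>_def N_def by simp
  have B0: "total_loss L T tau0 f xs cor
      \<le> real (N ^ CARD('d)) * (L * RR + 5/4 * L) + real T * A0 + real C * (L + PM)"
    unfolding tot using total_bound[OF xs C] .
  have uP: "u ^ d = P" unfolding u_def P_def using Tpos by (simp add: powr_power)
  have X: "real (N ^ CARD('d)) \<le> 2 ^ d * P"
  proof -
    have "real (N ^ CARD('d)) = real N ^ d" unfolding d_def by simp
    also have "\<dots> \<le> (2 * u) ^ d" using Nle by (intro power_mono) auto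
    also have "\<dots> = 2 ^ d * P" using uP by (simp add: power_mult_distrib)
    finally show ?thesis .
  qed
  have Teta: "real T * \<eta> = P"
  proof -
    have h: "real T * real T powr (- 1 / (real d + 1)) = real T powr (1 + - 1 / (real d + 1))"
      by (rule powr_mult_base) simp
    have e: "1 + - 1 / (real d + 1) = real d / (real d + 1)" by (simp add: field_simps)
    show ?thesis using h unfolding e P_def \<eta>_def eta0_of_def .
  qed
  have l_half: "l \<ge> 1/2"
  proof -
    have "ln 2 \<le> ln (real T)" using T by simp
    then show ?thesis unfolding l_def using ln2_ge by linarith
  qed
  have lnu: "ln u \<le> l"
  proof -
    have "ln u = ln (real T) / (real d + 1)" unfolding u_def by simp
    also have "\<dots> \<le> ln (real T)" using T1 by (simp add: divide_le_eq) (simp add: mult_le_cancel_left1 ln_ge_zero)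
    finally show ?thesis unfolding l_def .
  qed
  have RRb: "RR \<le> 5/2 * l + 2"
  proof -
    have "rr L \<le> 5/2 * l + 1"
    proof (cases "L < th")
      case True then show ?thesis unfolding rr_def using l_half by simp
    next
      case False
      have th_eq: "th = 10 * L / u" using th_def eta_eq by simp
      have "L / (10 * L / u) = u / 10" using L u1 by (simp add: field_simps)
      then have Lth: "L / th = u / 10" unfolding th_eq .
      have "ln (L / th) \<le> ln u" unfolding Lth using u1 by simp
      then have "ln (L / th) \<le> l" using lnu by linarith
      moreover have "ln (L / th) \<ge> 0" using False th_pos by simp
      ultimately have "ln (L / th) / ln (5/3) \<le> l / (2/5)"
        using ln53_ge by (intro frac_le) auto
      then show ?thesis unfolding rr_def using False by simp
    qed
    then show ?thesis unfolding RR_def by simp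
  qed
  have A0T: "real T * A0 = L * (11 * P + 6 * (real T / tau0))"
    unfolding A0_def using Teta[symmetric] by (simp add: algebra_simps)
  have Ppos: "P \<ge> 0" unfolding P_def by simp
  have t1: "real (N ^ CARD('d)) * (L * RR + 5/4 * L) \<le> L * ((2 ^ d * 10) * (P * l))"
  proof -
    have "real (N ^ CARD('d)) * (L * RR + 5/4 * L) = L * (real (N ^ CARD('d)) * (RR + 5/4))"
      by (simp add: algebra_simps)
    also have "\<dots> \<le> L * ((2 ^ d * P) * (10 * l))"
      using X RRb l_half RR_ge1 L Ppos by (intro mult_left_mono mult_mono) auto
    finally show ?thesis by (simp add: algebra_simps)
  qed
  have t2: "real C * (L + PM) \<le> L * (40 * (real C * l) + real C * tau0)"
  proof -
    have "L + PM = L * (2 * RR + 13 + tau0)" unfolding PM_def by (simp add: algebra_simps)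
    also have "\<dots> \<le> L * (40 * l + tau0)" using RRb l_half L by (intro mult_left_mono) auto
    finally have "real C * (L + PM) \<le> real C * (L * (40 * l + tau0))" by (intro mult_left_mono) auto
    then show ?thesis by (simp add: algebra_simps)
  qed
  have t3: "11 * P \<le> 22 * (P * l)"
  proof -
    have "P * 1 \<le> P * (2 * l)" using Ppos l_half by (intro mult_left_mono) auto
    then show ?thesis by simp
  qed
  define W where "W = real C * l + P * l + real C * tau0 + real T / tau0"
  have Cl: "real C * l \<ge> 0" "P * l \<ge> 0" "real C * tau0 \<ge> 0" "real T / tau0 \<ge> 0"
    using l_half Ppos tau0 by auto
  define z :: real where "z = 2 ^ d * 10"
  have z0: "z \<ge> 0" unfolding z_def by simp
  have L11: "L * (11 * P) \<le> L * (22 * (P * l))" using t3 L by (intro mult_left_mono) auto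
  have "total_loss L T tau0 f xs cor \<le> L * (z * (P * l) + 22 * (P * l) + 6 * (real T / tau0)
        + (40 * (real C * l) + real C * tau0))"
  proof -
    have e: "L * (z * (P * l) + 22 * (P * l) + 6 * (real T / tau0) + (40 * (real C * l) + real C * tau0))
      = L * (z * (P * l)) + L * (22 * (P * l)) + L * (6 * (real T / tau0)) + L * (40 * (real C * l) + real C * tau0)"
      by (simp only: distrib_left)
    have e2: "L * (11 * P + 6 * (real T / tau0)) = L * (11 * P) + L * (6 * (real T / tau0))"
      by (simp only: distrib_left)
    have t1': "real (N ^ CARD('d)) * (L * RR + 5 / 4 * L) \<le> L * (z * (P * l))" using t1 unfolding z_def .
    show ?thesis unfolding e using B0 t1' t2 A0T e2 L11 by linarith
  qed
  also have "\<dots> \<le> L * ((z + 62) * W)"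
  proof (intro mult_left_mono)
    show "0 \<le> L" using L by simp
    have p: "z * (real C * l) \<ge> 0" "z * (real C * tau0) \<ge> 0" "z * (real T / tau0) \<ge> 0"
      using z0 Cl by (simp_all only: mult_nonneg_nonneg)
    have e: "(z + 62) * W = z * (real C * l) + z * (P * l) + z * (real C * tau0) + z * (real T / tau0)
        + 62 * (real C * l) + 62 * (P * l) + 62 * (real C * tau0) + 62 * (real T / tau0)"
      unfolding W_def by (simp only: distrib_left distrib_right add.assoc)
    show "z * (P * l) + 22 * (P * l) + 6 * (real T / tau0) + (40 * (real C * l) + real C * tau0)
        \<le> (z + 62) * W"
      unfolding e using p Cl by linarith
  qed
  finally have "total_loss L T tau0 f xs cor \<le> L * ((z + 62) * W)" .
  then show ?thesis unfolding W_def P_def l_def d_def z_def by (simp only: mult.assoc)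
qed


lemma second_bound:
  fixes f :: "real^'d \<Rightarrow> real" and xs :: "nat \<Rightarrow> real^'d" and cor :: "nat \<Rightarrow> bool"
  assumes T: "T \<ge> 2" and L: "L > 0" and lip: "lipschitz_target L f"
    and xs: "\<forall>t<T. xs t \<in> unit_cube" and C: "card {t. t < T \<and> cor t} \<le> C"
  shows "total_loss L T (real T powr (1 / (real CARD('d) + 1))) f xs cor
     \<le> L * (3 * (2 ^ CARD('d) * 10 + 62)) * (real T powr (real CARD('d) / (real CARD('d) + 1))
                     + real C * real T powr (1 / (real CARD('d) + 1))) * ln (real T)"
proof -
  define d where "d = CARD('d)"
  define u where "u = real T powr (1 / (real d + 1))"
  define P where "P = real T powr (real d / (real d + 1))"
  define l where "l = ln (real T)"
  define K1 :: real where "K1 = 2 ^ d * 10 + 62"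
  have Tpos: "real T > 0" using T by simp
  have T1: "real T \<ge> 1" using T by simp
  have u1: "u \<ge> 1" unfolding u_def using T1 by (intro ge_one_powr_ge_zero) auto
  have Ppos: "P \<ge> 0" unfolding P_def by simp
  have l_half: "l \<ge> 1/2"
  proof -
    have "ln 2 \<le> ln (real T)" using T by simp
    then show ?thesis unfolding l_def using ln2_ge by linarith
  qed
  have K1: "K1 > 0" unfolding K1_def by (intro add_nonneg_pos) simp_all
  have Tu: "real T / u = P"
  proof -
    have "real T / u = real T powr 1 / real T powr (1 / (real d + 1))" unfolding u_def using Tpos by simp
    also have "\<dots> = real T powr (1 - 1 / (real d + 1))" by (rule powr_diff[symmetric])
    also have "1 - 1 / (real d + 1) = real d / (real d + 1)" by (simp add: field_simps)
    finally show ?thesis unfolding P_def .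
  qed
  have M: "total_loss L T u f xs cor \<le> L * K1 * (real C * l + P * l + real C * u + real T / u)"
    using main_bound[OF T L lip xs C u1] unfolding u_def P_def l_def K1_def d_def by simp
  have i1: "real C * l \<le> real C * u * l"
  proof -
    have "(real C * l) * 1 \<le> (real C * l) * u" using u1 l_half by (intro mult_left_mono) auto
    then show ?thesis by (simp add: mult_ac)
  qed
  have i2: "real C * u \<le> 2 * (real C * u * l)"
  proof -
    have "real C * u * 1 \<le> real C * u * (2 * l)" using u1 l_half by (intro mult_left_mono) auto
    then show ?thesis by simp
  qed
  have i3: "P \<le> 2 * (P * l)"
  proof -
    have "P * 1 \<le> P * (2 * l)" using Ppos l_half by (intro mult_left_mono) auto
    then show ?thesis by simp
  qed
  have "real C * l + P * l + real C * u + real T / u \<le> 3 * (P * l) + 3 * (real C * u * l)"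
    unfolding Tu using i1 i2 i3 by linarith
  then have "real C * l + P * l + real C * u + real T / u \<le> 3 * ((P + real C * u) * l)"
    by (simp only: distrib_right distrib_left)
  then have "L * K1 * (real C * l + P * l + real C * u + real T / u) \<le> L * K1 * (3 * ((P + real C * u) * l))"
    using L K1 by (intro mult_left_mono) auto
  then have "total_loss L T u f xs cor \<le> L * (3 * K1) * (P + real C * u) * l"
    using M by (simp only: mult.assoc mult.left_commute)
  then show ?thesis unfolding u_def P_def l_def K1_def d_def .
qed


theorem theorem14:
  shows "\<exists>K>0. \<forall>(T::nat) (L::real) (tau0::real) (C::nat) (f :: real^'d \<Rightarrow> real)
            (xs :: nat \<Rightarrow> real^'d) (cor :: nat \<Rightarrow> bool).
     T \<ge> 2 \<longrightarrow> L > 0 \<longrightarrow> lipschitz_target L f \<longrightarrow>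
     (\<forall>t<T. xs t \<in> unit_cube) \<longrightarrow> card {t. t < T \<and> cor t} \<le> C \<longrightarrow>
     (tau0 \<ge> 1 \<longrightarrow>
        total_loss L T tau0 f xs cor
          \<le> L * K * (real C * ln (real T)
                     + real T powr (real CARD('d) / (real CARD('d) + 1)) * ln (real T)
                     + real C * tau0 + real T / tau0)) \<and>
     total_loss L T (real T powr (1 / (real CARD('d) + 1))) f xs cor
          \<le> L * K * (real T powr (real CARD('d) / (real CARD('d) + 1))
                     + real C * real T powr (1 / (real CARD('d) + 1))) * ln (real T)"
proof -
  define K1 :: real where "K1 = 2 ^ CARD('d) * 10 + 62"
  have K1: "K1 > 0" unfolding K1_def by (intro add_nonneg_pos) simp_all
  show ?thesis
  proof (rule exI[where x = "3 * K1"], intro conjI allI impI)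
    show "3 * K1 > 0" using K1 by simp
  next
    fix T :: nat and L tau0 :: real and C :: nat and f :: "real^'d \<Rightarrow> real"
      and xs :: "nat \<Rightarrow> real^'d" and cor :: "nat \<Rightarrow> bool"
    assume T: "T \<ge> 2" and L: "L > 0" and lip: "lipschitz_target L f"
      and xs: "\<forall>t<T. xs t \<in> unit_cube" and C: "card {t. t < T \<and> cor t} \<le> C"
    {
      assume tau0: "tau0 \<ge> 1"
      define W where "W = real C * ln (real T)
                     + real T powr (real CARD('d) / (real CARD('d) + 1)) * ln (real T)
                     + real C * tau0 + real T / tau0"
      have lT: "ln (real T) \<ge> 0" using T by simp
      have W0: "W \<ge> 0" unfolding W_def using lT tau0 by simp
      have "total_loss L T tau0 f xs cor \<le> L * K1 * W"
        using main_bound[OF T L lip xs C tau0] unfolding W_def K1_def .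
      also have "\<dots> \<le> L * (3 * K1) * W"
        using W0 L K1 by (intro mult_right_mono) auto
      finally show "total_loss L T tau0 f xs cor \<le> L * (3 * K1) * (real C * ln (real T)
                     + real T powr (real CARD('d) / (real CARD('d) + 1)) * ln (real T)
                     + real C * tau0 + real T / tau0)" unfolding W_def .
    }
    show "total_loss L T (real T powr (1 / (real CARD('d) + 1))) f xs cor
          \<le> L * (3 * K1) * (real T powr (real CARD('d) / (real CARD('d) + 1))
                     + real C * real T powr (1 / (real CARD('d) + 1))) * ln (real T)"
      using second_bound[OF T L lip xs C] unfolding K1_def .
  qed
qed

end
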